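(* For every positive integer $D$ there is a deterministic algorithm (which may use $D$) such that, in every run whose sequence of communication graphs satisfies Assumption 1 with parameter $D$, the algorithm solves consensus, and every process has decided by round $r_{ST}+4D+1$, where $r_{ST}$ is the first round for which an interval $J=[r_{ST},r_{ST}+d]$ as in Assumption 1 exists.
   Context: Model: a finite set $\Pi$ of $n\ge2$ processes runs a deterministic algorithm in synchronous lock-step rounds $r=1,2,\dots$. An adversary fixes an infinite sequence of simple directed graphs $\mathcal{G}^1,\mathcal{G}^2,\dots$ on vertex set $\Pi$; $(p\to q)\in\mathcal{G}^r$ iff $q$ receives $p$'s round-$r$ message in round $r$. In round $r$ each process $p$ broadcasts a message determined by its current state (received exactly by its out-neighbours in $\mathcal{G}^r$), then computes its new state from its current state and the set of (sender, message) pairs it received in round $r$. Consensus: each process $p$ starts with an input value $v_p$ from an ordered set $V$ and may irrevocably decide a value; Agreement: any two decided values are equal; Validity: every decided value is the input value of some process; Termination: every process eventually decides. Causality: $p$ causally influences $q$ in round $t$ if $q=p$ or $(p\to q)\in\mathcal{G}^t$; a causal chain of length $k\ge1$ from $p$ in round $t$ to $q$ is a sequence $p=p_0,\dots,p_k=q$ with $p_i$ causally influencing $p_{i+1}$ in round $t+i$; the causal distance $d_t(p,q)$ is the least such $k$ ($\infty$ if none). A root component of $\mathcal{G}^t$ is a strongly connected component $\mathcal{R}$ with no edge $(q\to p)$, $p\in\mathcal{R}$, $q\notin\mathcal{R}$. For an interval $I=[r,s]$, an $I$-vertex-stable root component is a set $\mathcal{R}\subseteq\Pi$ that, in every round $t\in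 I$, is (the vertex set of) a root component of $\mathcal{G}^t$. When each $\mathcal{G}^x$ has a unique root component $\mathcal{R}^x$, the round-$x$ network causal diameter is $D^x=\max\{d_x(p,q):p\in\mathcal{R}^x,q\in\Pi\}$, and for $I=[r,s]$, $D^I=\max\{D^x: x\in I,\ x+D^x-1\le s\}$ ($\infty$ if this set is empty). An $I$-vertex-stable root component with $I=[r,s]$ is $D$-bounded if $D\ge D^I$ and $D^{s-D+1}\le D$. Assumption 1 (parameter $D$): for every round $r$ there is exactly one root component $\mathcal{R}^r$ in $\mathcal{G}^r$; every $I$-vertex-stable root component with $|I|\ge D$ (where $|[r,s]|=s-r+1$) is $D$-bounded; and there exists an interval $J=[r_{ST},r_{ST}+d]$ with $d>4D$ such that there is a $D$-bounded $J$-vertex-stable root component. *)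

theory Defs
  imports Main "HOL-Library.FSet" "HOL-Library.Extended_Nat"
begin

text \<open>A run's communication graphs: G r is the set of edges (p,q) of round r (r >= 1);
  the value G 0 is irrelevant.\<close>

definition simple_graphs :: "(nat \<Rightarrow> ('p \<times> 'p) set) \<Rightarrow> bool" where
  "simple_graphs G \<longleftrightarrow> (\<forall>r\<ge>1. \<forall>p. (p, p) \<notin> G r)"

text \<open>State space used for algorithms: full-information views (rich enough to simulate
  any deterministic algorithm). Messages are of the same type.\<close>

datatype ('p, 'v) view = Init 'p 'v | Step "('p, 'v) view" "('p \<times> ('p, 'v) view) fset"

text \<open>run ini msg tr inp G r p: state of p after round r (r = 0: initial state).\<close>

primrec run :: "('p \<Rightarrow> 'v \<Rightarrow> 's) \<Rightarrow> ('p \<Rightarrow> 's \<Rightarrow> 'm) \<Rightarrow> ('p \<Rightarrow> 's \<Rightarrow> ('p \<times> 'm) set \<Rightarrow> 's)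
   \<Rightarrow> ('p \<Rightarrow> 'v) \<Rightarrow> (nat \<Rightarrow> ('p \<times> 'p) set) \<Rightarrow> nat \<Rightarrow> 'p \<Rightarrow> 's" where
  "run ini msg tr inp G 0 p = ini p (inp p)"
| "run ini msg tr inp G (Suc r) p =
     tr p (run ini msg tr inp G r p)
        {(q, msg q (run ini msg tr inp G r q)) | q. (q, p) \<in> G (Suc r)}"

definition causally_influences :: "(nat \<Rightarrow> ('p \<times> 'p) set) \<Rightarrow> nat \<Rightarrow> 'p \<Rightarrow> 'p \<Rightarrow> bool" where
  "causally_influences G t p q \<longleftrightarrow> q = p \<or> (p, q) \<in> G t"

definition causal_chain :: "(nat \<Rightarrow> ('p \<times> 'p) set) \<Rightarrow> nat \<Rightarrow> nat \<Rightarrow> 'p \<Rightarrow> 'p \<Rightarrow> bool" where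
  "causal_chain G t k p q \<longleftrightarrow> k \<ge> 1 \<and>
     (\<exists>f :: nat \<Rightarrow> 'p. f 0 = p \<and> f k = q \<and>
        (\<forall>i<k. causally_influences G (t + i) (f i) (f (Suc i))))"

definition causal_dist :: "(nat \<Rightarrow> ('p \<times> 'p) set) \<Rightarrow> nat \<Rightarrow> 'p \<Rightarrow> 'p \<Rightarrow> enat" where
  "causal_dist G t p q =
     (if \<exists>k. causal_chain G t k p q then enat (LEAST k. causal_chain G t k p q) else \<infinity>)"

definition is_scc :: "('p \<times> 'p) set \<Rightarrow> 'p set \<Rightarrow> bool" where
  "is_scc E R \<longleftrightarrow> R \<noteq> {} \<and> (\<forall>p\<in>R. \<forall>q\<in>R. (p, q) \<in> E\<^sup>*) \<and>
     (\<forall>p\<in>R. \<forall>q. (p, q) \<in> E\<^sup>* \<and> (q, p) \<in> E\<^sup>* \<longrightarrow> q \<in> R)"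

definition is_root_component :: "('p \<times> 'p) set \<Rightarrow> 'p set \<Rightarrow> bool" where
  "is_root_component E R \<longleftrightarrow> is_scc E R \<and> (\<forall>p\<in>R. \<forall>q. (q, p) \<in> E \<longrightarrow> q \<in> R)"

definition vertex_stable_root :: "(nat \<Rightarrow> ('p \<times> 'p) set) \<Rightarrow> nat \<Rightarrow> nat \<Rightarrow> 'p set \<Rightarrow> bool" where
  "vertex_stable_root G r s R \<longleftrightarrow> (\<forall>t\<in>{r..s}. is_root_component (G t) R)"

definition root_of :: "(nat \<Rightarrow> ('p \<times> 'p) set) \<Rightarrow> nat \<Rightarrow> 'p set" where
  "root_of G x = (THE R. is_root_component (G x) R)"

definition net_diam :: "(nat \<Rightarrow> ('p \<times> 'p) set) \<Rightarrow> nat \<Rightarrow> enat" where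
  "net_diam G x = Max {causal_dist G x p q | p q. p \<in> root_of G x}"

definition net_diam_int :: "(nat \<Rightarrow> ('p \<times> 'p) set) \<Rightarrow> nat \<Rightarrow> nat \<Rightarrow> enat" where
  "net_diam_int G r s =
     (let S = {net_diam G x | x. x \<in> {r..s} \<and> enat x + net_diam G x - 1 \<le> enat s}
      in if S = {} then \<infinity> else Max S)"

definition D_bounded :: "(nat \<Rightarrow> ('p \<times> 'p) set) \<Rightarrow> nat \<Rightarrow> nat \<Rightarrow> nat \<Rightarrow> 'p set \<Rightarrow> bool" where
  "D_bounded G D r s R \<longleftrightarrow> vertex_stable_root G r s R \<and>
     net_diam_int G r s \<le> enat D \<and> net_diam G (s + 1 - D) \<le> enat D"

text \<open>Assumption 1 with parameter D. Rounds are numbered from 1.\<close>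
definition assumption1 :: "(nat \<Rightarrow> ('p \<times> 'p) set) \<Rightarrow> nat \<Rightarrow> bool" where
  "assumption1 G D \<longleftrightarrow>
     (\<forall>r\<ge>1. \<exists>!R. is_root_component (G r) R) \<and>
     (\<forall>r s R. 1 \<le> r \<longrightarrow> r \<le> s \<longrightarrow> s + 1 - r \<ge> D \<longrightarrow> vertex_stable_root G r s R
         \<longrightarrow> D_bounded G D r s R) \<and>
     (\<exists>rST d R. rST \<ge> 1 \<and> d > 4 * D \<and> D_bounded G D rST (rST + d) R)"

definition r_ST :: "(nat \<Rightarrow> ('p \<times> 'p) set) \<Rightarrow> nat \<Rightarrow> nat" where
  "r_ST G D = (LEAST r. r \<ge> 1 \<and> (\<exists>d R. d > 4 * D \<and> D_bounded G D r (r + d) R))"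

text \<open>dec s = Some v means a process in state s has decided v.\<close>
definition solves_consensus ::
  "(nat \<Rightarrow> 'p \<Rightarrow> 's) \<Rightarrow> ('s \<Rightarrow> 'v option) \<Rightarrow> ('p \<Rightarrow> 'v) \<Rightarrow> bool" where
  "solves_consensus st dec inp \<longleftrightarrow>
     (\<forall>r r' p v. r \<le> r' \<longrightarrow> dec (st r p) = Some v \<longrightarrow> dec (st r' p) = Some v) \<and>
     (\<forall>r r' p q v w. dec (st r p) = Some v \<longrightarrow> dec (st r' q) = Some w \<longrightarrow> v = w) \<and>
     (\<forall>r p v. dec (st r p) = Some v \<longrightarrow> (\<exists>q. v = inp q)) \<and>
     (\<forall>p. \<exists>r. dec (st r p) \<noteq> None)"

end

theory Submission
  imports Defs
begin

primrec owner :: "('p,'v) view \<Rightarrow> 'p" where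
 "owner (Init p v) = p" | "owner (Step s M) = owner s"
primrec vtime :: "('p,'v) view \<Rightarrow> nat" where
 "vtime (Init p v) = 0" | "vtime (Step s M) = Suc (vtime s)"
primrec inpv :: "('p,'v) view \<Rightarrow> 'v" where
 "inpv (Init p v) = v" | "inpv (Step s M) = inpv s"
primrec senders :: "('p,'v) view \<Rightarrow> 'p set" where
 "senders (Init p v) = {}" | "senders (Step s M) = fst ` fset M"

inductive sub :: "('p,'v) view \<Rightarrow> ('p,'v) view \<Rightarrow> bool" where
  srefl: "sub V V"
| sprev: "sub V s \<Longrightarrow> sub V (Step s M)"
| smsg: "(q,w) \<in> fset M \<Longrightarrow> sub V w \<Longrightarrow> sub V (Step s M)"

lemma sub_trans0: "sub B C \<Longrightarrow> sub A B \<Longrightarrow> sub A C"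
  by (induction B C rule: sub.induct) (auto intro: sub.intros)
lemma sub_trans: "sub A B \<Longrightarrow> sub B C \<Longrightarrow> sub A C"
  using sub_trans0 by blast

definition stt :: "(nat \<Rightarrow> ('p \<times> 'p) set) \<Rightarrow> ('p \<Rightarrow> 'v) \<Rightarrow> nat \<Rightarrow> 'p \<Rightarrow> ('p,'v) view" where
  "stt G inp = run Init (\<lambda>p s. s) (\<lambda>p s M. Step s (Abs_fset M)) inp G"

lemma stt_0: "stt G inp 0 p = Init p (inp p)"
  by (simp add: stt_def)

lemma fset_msgs:
  "fset (Abs_fset {(q, f q) | q. (q, p) \<in> (E::('p::finite \<times> 'p) set)}) = {(q, f q) | q. (q, p) \<in> E}"
proof -
  have "{(q, f q) | q. (q, p) \<in> E} = (\<lambda>q. (q, f q)) ` {q. (q,p) \<in> E}" by auto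
  hence "finite {(q, f q) | q. (q, p) \<in> E}" by simp
  thus ?thesis by (simp add: Abs_fset_inverse)
qed

lemma stt_Suc: "stt G inp (Suc r) p = Step (stt G inp r p) (Abs_fset {(q, stt G inp r q) | q. (q, p) \<in> G (Suc r)})"
  by (simp add: stt_def)

lemma owner_stt[simp]: "owner (stt G inp t p) = p"
  by (induction t) (auto simp: stt_0 stt_Suc)
lemma vtime_stt[simp]: "vtime (stt G inp t p) = t"
  by (induction t) (auto simp: stt_0 stt_Suc)
lemma inpv_stt[simp]: "inpv (stt G inp t p) = inp p"
  by (induction t) (auto simp: stt_0 stt_Suc)
lemma senders_stt[simp]: "senders (stt G inp (Suc t) (p::'p::finite)) = {q. (q,p) \<in> G (Suc t)}"
  by (auto simp: stt_Suc fset_msgs image_iff)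

lemma stt_inj: "stt G inp y m = stt G inp y' m' \<Longrightarrow> y = y' \<and> m = m'"
  by (metis owner_stt vtime_stt)

lemma sub_Step_cases: "sub W (Step s M) \<Longrightarrow> W = Step s M \<or> sub W s \<or> (\<exists>q w. (q,w) \<in> fset M \<and> sub W w)"
  by (erule sub.cases) auto

lemma sub_Init: "sub W (Init p v) \<Longrightarrow> W = Init p v"
  by (erule sub.cases) auto

lemma sub_stt: "sub W (stt G inp t (q::'p::finite)) \<Longrightarrow> \<exists>y m. W = stt G inp y m \<and> y \<le> t"
proof (induction t arbitrary: q W)
  case 0
  then show ?case by (auto simp: stt_0 dest: sub_Init)
next
  case (Suc t)
  from sub_Step_cases[OF Suc.prems[unfolded stt_Suc]]
  consider "W = stt G inp (Suc t) q" | "sub W (stt G inp t q)"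
    | q' w where "(q',w) \<in> {(q', stt G inp t q') | q'. (q', q) \<in> G (Suc t)}" "sub W w"
    unfolding stt_Suc[symmetric] fset_msgs by blast
  then show ?case
  proof cases
    case 1 then show ?thesis by blast
  next
    case 2
    from Suc.IH[OF this] obtain y m where "W = stt G inp y m" "y \<le> t" by blast
    then show ?thesis using le_SucI by blast
  next
    case 3
    then obtain q'' where "w = stt G inp t q''" by blast
    hence "sub W (stt G inp t q'')" using 3 by simp
    from Suc.IH[OF this] obtain y m where "W = stt G inp y m" "y \<le> t" by blast
    then show ?thesis using le_SucI by blast
  qed
qed

lemma sub_prefix: "y \<le> t \<Longrightarrow> sub (stt G inp y m) (stt G inp t m)"
proof (induction t)
  case 0 then show ?case by (auto intro: sub.intros)
next
  case (Suc t)
  show ?case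
  proof (cases "y = Suc t")
    case True then show ?thesis by (simp add: srefl)
  next
    case False
    hence "sub (stt G inp y m) (stt G inp t m)" using Suc by simp
    then show ?thesis unfolding stt_Suc[of G inp t m] by (rule sprev)
  qed
qed

lemma sub_edge: "(p, q) \<in> G (Suc t) \<Longrightarrow> sub (stt G inp t p) (stt G inp (Suc t) (q::'p::finite))"
  unfolding stt_Suc by (rule smsg[where q=p]) (auto simp: fset_msgs intro: srefl)

lemma chain_sub:
  assumes "causal_chain G x k p q" "x \<ge> 1"
  shows "sub (stt G inp (x-1) p) (stt G inp (x+k-1) (q::'p::finite))"
proof -
  from assms obtain f where f: "f 0 = p" "f k = q" "\<forall>i<k. causally_influences G (x + i) (f i) (f (Suc i))"
    unfolding causal_chain_def by blast
  have "\<forall>j\<le>k. sub (stt G inp (x-1) p) (stt G inp (x+j-1) (f j))"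
  proof (intro allI impI)
    fix j assume "j \<le> k"
    then show "sub (stt G inp (x-1) p) (stt G inp (x+j-1) (f j))"
    proof (induction j)
      case 0 then show ?case by (simp add: f srefl)
    next
      case (Suc j)
      hence IH: "sub (stt G inp (x-1) p) (stt G inp (x+j-1) (f j))" by simp
      have ci: "causally_influences G (x + j) (f j) (f (Suc j))" using f Suc.prems by simp
      have e: "x + Suc j - 1 = Suc (x + j - 1)" "Suc (x+j-1) = x + j" using assms(2) by auto
      show ?case
      proof (cases "f (Suc j) = f j")
        case True
        have "sub (stt G inp (x+j-1) (f j)) (stt G inp (x + Suc j - 1) (f j))"
          by (rule sub_prefix) simp
        then show ?thesis using IH True by (metis sub_trans)
      next
        case False
        hence "(f j, f (Suc j)) \<in> G (Suc (x+j-1))" using ci e unfolding causally_influences_def by auto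
        hence "sub (stt G inp (x+j-1) (f j)) (stt G inp (Suc (x + j - 1)) (f (Suc j)))"
          by (rule sub_edge)
        then show ?thesis using IH e(1) by (metis sub_trans)
      qed
    qed
  qed
  thus ?thesis using f by auto
qed

lemma rc_unfold: "is_root_component E R \<longleftrightarrow> R \<noteq> {} \<and> (\<forall>p\<in>R. \<forall>q\<in>R. (p, q) \<in> E\<^sup>*) \<and>
     (\<forall>p\<in>R. \<forall>q. (p, q) \<in> E\<^sup>* \<and> (q, p) \<in> E\<^sup>* \<longrightarrow> q \<in> R) \<and> (\<forall>p\<in>R. \<forall>q. (q, p) \<in> E \<longrightarrow> q \<in> R)"
  unfolding is_root_component_def is_scc_def by (simp only: conj_assoc)

lemma rc_restrict:
  "is_root_component E R \<longleftrightarrow> is_root_component {(p,m). (p,m) \<in> E \<and> m \<in> R} R"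
  (is "?L \<longleftrightarrow> is_root_component ?E' R")
proof
  assume L: ?L
  have ne: "R \<noteq> {}" and con: "\<forall>p\<in>R. \<forall>q\<in>R. (p, q) \<in> E\<^sup>*"
    and mx: "\<forall>p\<in>R. \<forall>q. (p, q) \<in> E\<^sup>* \<and> (q, p) \<in> E\<^sup>* \<longrightarrow> q \<in> R"
    and cl: "\<forall>p\<in>R. \<forall>q. (q, p) \<in> E \<longrightarrow> q \<in> R"
    using L[unfolded rc_unfold] by blast+
  have sub1: "(a, b) \<in> E\<^sup>* \<Longrightarrow> b \<in> R \<Longrightarrow> (a, b) \<in> ?E'\<^sup>*" for a b
  proof (induction rule: rtrancl_induct)
    case base then show ?case by simp
  next
    case (step y z)
    hence yR: "y \<in> R" using cl by blast
    have "(a, y) \<in> ?E'\<^sup>*" using step.IH yR by blast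
    moreover have "(y, z) \<in> ?E'" using step.hyps(2) step.prems by simp
    ultimately show ?case by (rule rtrancl_into_rtrancl)
  qed
  have sub2: "?E'\<^sup>* \<subseteq> E\<^sup>*" by (rule rtrancl_mono) auto
  have "\<forall>p\<in>R. \<forall>q\<in>R. (p, q) \<in> ?E'\<^sup>*" using con sub1 by blast
  moreover have "\<forall>p\<in>R. \<forall>q. (p, q) \<in> ?E'\<^sup>* \<and> (q, p) \<in> ?E'\<^sup>* \<longrightarrow> q \<in> R"
    using mx sub2 by blast
  moreover have "\<forall>p\<in>R. \<forall>q. (q, p) \<in> ?E' \<longrightarrow> q \<in> R" using cl by blast
  ultimately show "is_root_component ?E' R" using ne unfolding rc_unfold by blast
next
  assume L: "is_root_component ?E' R"
  have ne: "R \<noteq> {}" and con: "\<forall>p\<in>R. \<forall>q\<in>R. (p, q) \<in> ?E'\<^sup>*"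
    and cl2: "\<forall>p\<in>R. \<forall>q. (q, p) \<in> ?E' \<longrightarrow> q \<in> R"
    using L[unfolded rc_unfold] by blast+
  have cl: "\<forall>p\<in>R. \<forall>q. (q, p) \<in> E \<longrightarrow> q \<in> R" using cl2 by blast
  have sub2: "?E'\<^sup>* \<subseteq> E\<^sup>*" by (rule rtrancl_mono) auto
  have bk: "(a, b) \<in> E\<^sup>* \<Longrightarrow> b \<in> R \<Longrightarrow> a \<in> R" for a b
  proof (induction rule: converse_rtrancl_induct)
    case base then show ?case by simp
  next
    case (step y z)
    then show ?case using cl by blast
  qed
  have "\<forall>p\<in>R. \<forall>q\<in>R. (p, q) \<in> E\<^sup>*" using con sub2 by blast
  moreover have "\<forall>p\<in>R. \<forall>q. (p, q) \<in> E\<^sup>* \<and> (q, p) \<in> E\<^sup>* \<longrightarrow> q \<in> R"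
    using bk by blast
  ultimately show ?L using ne cl unfolding rc_unfold by blast
qed

definition kr :: "('p,'v) view \<Rightarrow> 'p set \<Rightarrow> nat \<Rightarrow> bool" where
  "kr V R y \<longleftrightarrow> (\<forall>m\<in>R. \<exists>W. sub W V \<and> owner W = m \<and> vtime W = y) \<and>
     is_root_component {(p,m). m \<in> R \<and> (\<exists>W. sub W V \<and> owner W = m \<and> vtime W = y \<and> p \<in> senders W)} R"

lemma sub_stt_id: "sub W (stt G inp t (q::'p::finite)) \<Longrightarrow> owner W = m \<Longrightarrow> vtime W = y \<Longrightarrow> W = stt G inp y m"
  using sub_stt by fastforce

lemma kr_char:
  assumes "1 \<le> y" "\<forall>r\<ge>1. \<exists>!R. is_root_component (G r) R"
  shows "kr (stt G inp t (q::'p::finite)) R y \<longleftrightarrow> (\<forall>m\<in>R. sub (stt G inp y m) (stt G inp t q)) \<and> R = root_of G y"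
proof -
  obtain y' where y': "y = Suc y'" using assms(1) by (cases y) auto
  let ?V = "stt G inp t q"
  have known: "(\<forall>m\<in>R. \<exists>W. sub W ?V \<and> owner W = m \<and> vtime W = y) \<longleftrightarrow> (\<forall>m\<in>R. sub (stt G inp y m) ?V)"
    using sub_stt_id by fastforce
  have edges: "(\<forall>m\<in>R. sub (stt G inp y m) ?V) \<Longrightarrow>
     {(p,m). m \<in> R \<and> (\<exists>W. sub W ?V \<and> owner W = m \<and> vtime W = y \<and> p \<in> senders W)}
     = {(p,m). (p,m) \<in> G y \<and> m \<in> R}"
  proof -
    assume k: "\<forall>m\<in>R. sub (stt G inp y m) ?V"
    show ?thesis
    proof (intro set_eqI iffI)
      fix e assume "e \<in> {(p,m). m \<in> R \<and> (\<exists>W. sub W ?V \<and> owner W = m \<and> vtime W = y \<and> p \<in> senders W)}"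
      then obtain p m W where e: "e = (p,m)" "m \<in> R" "sub W ?V" "owner W = m" "vtime W = y" "p \<in> senders W" by blast
      hence "W = stt G inp y m" using sub_stt_id by blast
      thus "e \<in> {(p,m). (p,m) \<in> G y \<and> m \<in> R}" using e y' by simp
    next
      fix e assume "e \<in> {(p,m). (p,m) \<in> G y \<and> m \<in> R}"
      then obtain p m where e: "e = (p,m)" "(p,m) \<in> G y" "m \<in> R" by blast
      hence "p \<in> senders (stt G inp y m)" using y' by simp
      thus "e \<in> {(p,m). m \<in> R \<and> (\<exists>W. sub W ?V \<and> owner W = m \<and> vtime W = y \<and> p \<in> senders W)}"
        using e k by auto
    qed
  qed
  have uq: "is_root_component (G y) R \<longleftrightarrow> R = root_of G y"
  proof -
    have "\<exists>!R. is_root_component (G y) R" using assms by blast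
    then show ?thesis unfolding root_of_def by (metis theI')
  qed
  show ?thesis
  proof
    assume a: "kr ?V R y"
    hence k: "\<forall>m\<in>R. sub (stt G inp y m) ?V" unfolding kr_def using known by blast
    have "is_root_component {(p,m). m \<in> R \<and> (\<exists>W. sub W ?V \<and> owner W = m \<and> vtime W = y \<and> p \<in> senders W)} R"
      using a unfolding kr_def by blast
    hence "is_root_component {(p,m). (p,m) \<in> G y \<and> m \<in> R} R" unfolding edges[OF k] .
    hence "is_root_component (G y) R" using rc_restrict by blast
    then show "(\<forall>m\<in>R. sub (stt G inp y m) ?V) \<and> R = root_of G y" using k uq by blast
  next
    assume a: "(\<forall>m\<in>R. sub (stt G inp y m) ?V) \<and> R = root_of G y"
    hence k: "\<forall>m\<in>R. sub (stt G inp y m) ?V" by blast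
    have "is_root_component (G y) R" using a uq by blast
    hence "is_root_component {(p,m). (p,m) \<in> G y \<and> m \<in> R} R" using rc_restrict by blast
    hence "is_root_component {(p,m). m \<in> R \<and> (\<exists>W. sub W ?V \<and> owner W = m \<and> vtime W = y \<and> p \<in> senders W)} R"
      unfolding edges[OF k] .
    then show "kr ?V R y" unfolding kr_def using k known by blast
  qed
qed

lemma root_of_is: assumes "\<forall>r\<ge>1. \<exists>!R. is_root_component (G r) R" "1 \<le> y"
  shows "is_root_component (G y) (root_of G y)"
proof -
  have "\<exists>!R. is_root_component (G y) R" using assms by blast
  thus ?thesis unfolding root_of_def by (rule theI')
qed

lemma root_of_eq: assumes "\<forall>r\<ge>1. \<exists>!R. is_root_component (G r) R" "1 \<le> y" "is_root_component (G y) R"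
  shows "root_of G y = R"
proof -
  have "\<exists>!R. is_root_component (G y) R" using assms by blast
  thus ?thesis unfolding root_of_def using assms(3) by (rule the1_equality)
qed

lemma root_of_ne: assumes "\<forall>r\<ge>1. \<exists>!R. is_root_component (G r) R" "1 \<le> y"
  shows "root_of G y \<noteq> {}"
  using root_of_is[OF assms] unfolding rc_unfold by blast

lemma spread:
  fixes G :: "nat \<Rightarrow> ('p::finite \<times> 'p) set"
  assumes A2: "\<forall>r s R. 1 \<le> r \<longrightarrow> r \<le> s \<longrightarrow> s + 1 - r \<ge> D \<longrightarrow> vertex_stable_root G r s R \<longrightarrow> D_bounded G D r s R"
    and uq: "\<forall>r\<ge>1. \<exists>!R. is_root_component (G r) R"
    and vs: "vertex_stable_root G a b R" and a1: "1 \<le> a" and ab: "a \<le> b" and len: "b + 1 - a \<ge> D"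
    and D1: "D \<ge> 1" and ay: "a \<le> y" and yb: "y + D \<le> b" and mR: "m \<in> R"
  shows "sub (stt G inp y m) (stt G inp b q)"
proof -
  define x where "x = b + 1 - D"
  have x1: "1 \<le> x" "a \<le> x" "x \<le> b" using len D1 ab a1 yb unfolding x_def by auto
  have "D_bounded G D a b R" using A2[rule_format, OF a1 ab len vs] .
  hence nd: "net_diam G x \<le> enat D" unfolding D_bounded_def x_def by blast
  have "is_root_component (G x) R" using vs x1 unfolding vertex_stable_root_def by auto
  hence Rx: "root_of G x = R" using root_of_eq[OF uq x1(1)] by blast
  let ?S = "{causal_dist G x p q | p q. p \<in> root_of G x}"
  have "?S \<subseteq> (\<lambda>(p,q). causal_dist G x p q) ` UNIV" by auto
  moreover have "finite ((\<lambda>(p,q). causal_dist G x p q) ` (UNIV :: ('p \<times> 'p) set))" by simp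
  ultimately have fin: "finite ?S" by (rule finite_subset)
  have "causal_dist G x m q \<in> ?S" using mR Rx by blast
  hence "causal_dist G x m q \<le> Max ?S" by (rule Max_ge[OF fin])
  hence cd: "causal_dist G x m q \<le> enat D" using nd unfolding net_diam_def by simp
  have ex: "\<exists>k. causal_chain G x k m q"
  proof (rule ccontr)
    assume "\<not> ?thesis"
    hence "causal_dist G x m q = \<infinity>" unfolding causal_dist_def by simp
    thus False using cd by simp
  qed
  define k where "k = (LEAST k. causal_chain G x k m q)"
  have ch: "causal_chain G x k m q" unfolding k_def using ex by (rule LeastI_ex)
  have "causal_dist G x m q = enat k" unfolding causal_dist_def k_def using ex by simp
  hence kD: "k \<le> D" using cd by simp
  have s1: "sub (stt G inp (x-1) m) (stt G inp (x+k-1) q)" using chain_sub[OF ch x1(1)] .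
  have s0: "sub (stt G inp y m) (stt G inp (x-1) m)" by (rule sub_prefix) (use yb x_def in auto)
  have s2: "sub (stt G inp (x+k-1) q) (stt G inp b q)" by (rule sub_prefix) (use kD x_def x1 in auto)
  show ?thesis using sub_trans[OF s0 sub_trans[OF s1 s2]] .
qed

definition getv :: "('p,'v) view \<Rightarrow> 'p \<Rightarrow> nat \<Rightarrow> ('p,'v) view" where
  "getv V m y = (SOME W. sub W V \<and> owner W = m \<and> vtime W = y)"
definition Rof :: "('p,'v) view \<Rightarrow> nat \<Rightarrow> 'p set" where
  "Rof V y = (SOME R. kr V R y)"
definition Ysof :: "('p,'v) view \<Rightarrow> nat \<Rightarrow> nat set" where
  "Ysof V y = {y'. 1 \<le> y' \<and> y' < y \<and> (\<exists>m\<in>Rof V y. \<exists>R'. kr (getv V m y) R' y')}"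

function vv :: "('p,'v::linorder) view \<Rightarrow> nat \<Rightarrow> 'v" where
  "vv V y = (if 2 \<le> y \<and> kr V (Rof V y) (y-1) then vv V (y-1)
     else if Ysof V y \<noteq> {} then vv V (Max (Ysof V y))
     else Min (inpv ` (\<lambda>m. getv V m y) ` Rof V y))"
  by pat_completeness auto
termination
proof (relation "measure (\<lambda>(V,y). y)")
  show "wf (measure (\<lambda>(V,y). y))" by simp
next
  fix V :: "('p,'v) view" and y :: nat
  assume "2 \<le> y \<and> kr V (Rof V y) (y-1)"
  thus "((V, y-1), (V, y)) \<in> measure (\<lambda>(V,y). y)" by simp
next
  fix V :: "('p,'v) view" and y :: nat
  assume ne: "Ysof V y \<noteq> {}"
  have fin: "finite (Ysof V y)" by (rule finite_subset[of _ "{..<y}"]) (auto simp: Ysof_def)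
  have "Max (Ysof V y) \<in> Ysof V y" using Max_in[OF fin ne] .
  hence "Max (Ysof V y) < y" unfolding Ysof_def by simp
  thus "((V, Max (Ysof V y)), (V, y)) \<in> measure (\<lambda>(V,y). y)" by simp
qed

definition GY :: "(nat \<Rightarrow> ('p \<times> 'p) set) \<Rightarrow> ('p \<Rightarrow> 'v) \<Rightarrow> nat \<Rightarrow> nat set" where
  "GY G inp y = {y'. 1 \<le> y' \<and> y' < y \<and> (\<exists>m\<in>root_of G y. \<forall>m'\<in>root_of G y'. sub (stt G inp y' m') (stt G inp y m))}"

lemma GY_fin: "finite (GY G inp y)"
  by (rule finite_subset[of _ "{..<y}"]) (auto simp: GY_def)

lemma GY_Max: "GY G inp y \<noteq> {} \<Longrightarrow> Max (GY G inp y) \<in> GY G inp y"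
  using Max_in[OF GY_fin] by blast

function gval :: "(nat \<Rightarrow> ('p \<times> 'p) set) \<Rightarrow> ('p \<Rightarrow> 'v::linorder) \<Rightarrow> nat \<Rightarrow> 'v" where
  "gval G inp y = (if 2 \<le> y \<and> root_of G (y-1) = root_of G y then gval G inp (y-1)
     else if GY G inp y \<noteq> {} then gval G inp (Max (GY G inp y))
     else Min (inp ` root_of G y))"
  by pat_completeness auto
termination
proof (relation "measure (\<lambda>(G,inp,y). y)")
  show "wf (measure (\<lambda>(G,inp,y). y))" by simp
next
  fix G :: "nat \<Rightarrow> ('p \<times> 'p) set" and inp :: "'p \<Rightarrow> 'v" and y :: nat
  assume "2 \<le> y \<and> root_of G (y-1) = root_of G y"
  thus "((G, inp, y-1), (G, inp, y)) \<in> measure (\<lambda>(G,inp,y). y)" by simp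
next
  fix G :: "nat \<Rightarrow> ('p \<times> 'p) set" and inp :: "'p \<Rightarrow> 'v" and y :: nat
  assume ne: "GY G inp y \<noteq> {}"
  have "Max (GY G inp y) \<in> GY G inp y" by (rule GY_Max[OF ne])
  hence "Max (GY G inp y) < y" unfolding GY_def by simp
  thus "((G, inp, Max (GY G inp y)), (G, inp, y)) \<in> measure (\<lambda>(G,inp,y). y)" by simp
qed

declare vv.simps[simp del] gval.simps[simp del]


lemma gval_nc: "\<not> (2 \<le> y \<and> root_of G (y-1) = root_of G y) \<Longrightarrow>
  gval G inp y = (if GY G inp y \<noteq> {} then gval G inp (Max (GY G inp y)) else Min (inp ` root_of G y))"
  by (subst gval.simps) (rule if_not_P)

lemma gval_c: "2 \<le> y \<and> root_of G (y-1) = root_of G y \<Longrightarrow> gval G inp y = gval G inp (y-1)"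
  by (subst gval.simps) (rule if_P)

lemma vv_gval:
  fixes G :: "nat \<Rightarrow> ('p::finite \<times> 'p) set" and inp :: "'p \<Rightarrow> 'v::linorder"
  assumes uq: "\<forall>r\<ge>1. \<exists>!R. is_root_component (G r) R"
  shows "1 \<le> y \<Longrightarrow> (\<forall>m\<in>root_of G y. sub (stt G inp y m) (stt G inp t q)) \<Longrightarrow>
     vv (stt G inp t q) y = gval G inp y"
proof (induction y rule: less_induct)
  case (less y)
  let ?V = "stt G inp t q"
  have y1: "1 \<le> y" and kn: "\<forall>m\<in>root_of G y. sub (stt G inp y m) ?V" using less.prems by auto
  have kr0: "kr ?V (root_of G y) y" using kr_char[OF y1 uq] kn by blast
  have "kr ?V (Rof ?V y) y" unfolding Rof_def using kr0 by (rule someI)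
  hence Rof: "Rof ?V y = root_of G y" using kr_char[OF y1 uq] by blast
  have gv: "getv ?V m y = stt G inp y m" if m: "m \<in> root_of G y" for m
  proof -
    have "\<exists>W. sub W ?V \<and> owner W = m \<and> vtime W = y" using kn m by (intro exI[of _ "stt G inp y m"]) auto
    hence "sub (getv ?V m y) ?V \<and> owner (getv ?V m y) = m \<and> vtime (getv ?V m y) = y"
      unfolding getv_def by (rule someI_ex)
    thus ?thesis using sub_stt_id by blast
  qed
  have kprev: "\<forall>m\<in>root_of G y. sub (stt G inp (y-1) m) ?V"
  proof
    fix m assume "m \<in> root_of G y"
    thus "sub (stt G inp (y-1) m) ?V" using sub_trans[OF sub_prefix[of "y-1" y] kn[rule_format]] by simp
  qed
  have c1: "kr ?V (root_of G y) (y-1) \<longleftrightarrow> root_of G (y-1) = root_of G y" if y2: "2 \<le> y"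
  proof -
    have "1 \<le> y - 1" using y2 by simp
    from kr_char[OF this uq, of inp t q "root_of G y"] kprev show ?thesis by auto
  qed
  have hlp: "(\<exists>R'. kr (getv ?V m y) R' y') \<longleftrightarrow> (\<forall>m'\<in>root_of G y'. sub (stt G inp y' m') (stt G inp y m))"
    if m: "m \<in> root_of G y" and y': "1 \<le> y'" for m y'
    unfolding gv[OF m] kr_char[OF y' uq] by blast
  have Ys: "Ysof ?V y = GY G inp y"
  proof (rule set_eqI)
    fix y'
    show "y' \<in> Ysof ?V y \<longleftrightarrow> y' \<in> GY G inp y"
    proof (cases "1 \<le> y'")
      case True
      then show ?thesis unfolding Ysof_def GY_def Rof using hlp[OF _ True] by auto
    next
      case False
      then show ?thesis unfolding Ysof_def GY_def by simp
    qed
  qed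
  show ?case
  proof (cases "2 \<le> y \<and> root_of G (y-1) = root_of G y")
    case True
    hence "vv ?V y = vv ?V (y-1)" using c1 Rof by (subst vv.simps) simp
    moreover have "gval G inp y = gval G inp (y-1)" using gval_c[OF True] .
    moreover have "vv ?V (y-1) = gval G inp (y-1)"
    proof (rule less.IH)
      show "y - 1 < y" "1 \<le> y - 1" using True by auto
      show "\<forall>m\<in>root_of G (y - 1). sub (stt G inp (y - 1) m) ?V" using True kprev by simp
    qed
    ultimately show ?thesis by simp
  next
    case False
    hence nc: "\<not> (2 \<le> y \<and> kr ?V (Rof ?V y) (y-1))" using c1 Rof by auto
    show ?thesis
    proof (cases "GY G inp y \<noteq> {}")
      case True
      define y'' where "y'' = Max (GY G inp y)"
      have yin: "y'' \<in> GY G inp y" unfolding y''_def by (rule GY_Max[OF True])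
      have "vv ?V y = (if Ysof ?V y \<noteq> {} then vv ?V (Max (Ysof ?V y))
         else Min (inpv ` (\<lambda>m. getv ?V m y) ` Rof ?V y))"
        by (subst vv.simps) (rule if_not_P[OF nc])
      hence "vv ?V y = vv ?V y''" using True Ys unfolding y''_def by simp
      moreover have "gval G inp y = gval G inp y''" using gval_nc[OF False, where inp=inp] True unfolding y''_def by simp
      moreover have "vv ?V y'' = gval G inp y''"
      proof (rule less.IH)
        show "y'' < y" "1 \<le> y''" using yin unfolding GY_def by auto
        from yin obtain m where m: "m \<in> root_of G y" and a: "\<forall>m'\<in>root_of G y''. sub (stt G inp y'' m') (stt G inp y m)"
          unfolding GY_def by blast
        show "\<forall>m\<in>root_of G y''. sub (stt G inp y'' m) ?V"
          using a sub_trans kn m by blast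
      qed
      ultimately show ?thesis by simp
    next
      case False2: False
      have "vv ?V y = (if Ysof ?V y \<noteq> {} then vv ?V (Max (Ysof ?V y))
         else Min (inpv ` (\<lambda>m. getv ?V m y) ` Rof ?V y))"
        by (subst vv.simps) (rule if_not_P[OF nc])
      hence "vv ?V y = Min (inpv ` (\<lambda>m. getv ?V m y) ` Rof ?V y)" using False2 Ys by simp
      also have "inpv ` (\<lambda>m. getv ?V m y) ` Rof ?V y = inp ` root_of G y"
        unfolding Rof image_image using gv by (auto intro!: image_cong)
      also have "Min (inp ` root_of G y) = gval G inp y" using gval_nc[OF False, where inp=inp] False2 by simp
      finally show ?thesis .
    qed
  qed
qed

definition win :: "(nat \<Rightarrow> ('p \<times> 'p) set) \<Rightarrow> nat \<Rightarrow> nat \<Rightarrow> bool" where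
  "win G D y \<longleftrightarrow> 1 \<le> y \<and> (\<forall>i\<le>D. root_of G (y+i) = root_of G y)"

lemma claim:
  fixes G :: "nat \<Rightarrow> ('p::finite \<times> 'p) set" and inp :: "'p \<Rightarrow> 'v::linorder"
  assumes A2: "\<forall>r s R. 1 \<le> r \<longrightarrow> r \<le> s \<longrightarrow> s + 1 - r \<ge> D \<longrightarrow> vertex_stable_root G r s R \<longrightarrow> D_bounded G D r s R"
    and uq: "\<forall>r\<ge>1. \<exists>!R. is_root_component (G r) R"
    and D1: "D \<ge> 1" and w: "win G D y0"
  shows "y0 \<le> y \<Longrightarrow> gval G inp y = gval G inp y0"
proof (induction y rule: less_induct)
  case (less y)
  have y01: "1 \<le> y0" and wR: "\<forall>i\<le>D. root_of G (y0+i) = root_of G y0" using w unfolding win_def by auto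
  show ?case
  proof (cases "y = y0")
    case True then show ?thesis by simp
  next
    case False
    hence yg: "y0 < y" using less.prems by simp
    show ?thesis
    proof (cases "2 \<le> y \<and> root_of G (y-1) = root_of G y")
      case True
      hence "gval G inp y = gval G inp (y-1)" by (rule gval_c)
      also have "\<dots> = gval G inp y0" using less.IH[of "y-1"] yg by simp
      finally show ?thesis .
    next
      case nc: False
      let ?R0 = "root_of G y0"
      have ex: "\<exists>z. y0 < z \<and> root_of G z \<noteq> ?R0 \<and> z \<le> y"
      proof (cases "root_of G y = ?R0")
        case True
        hence "root_of G (y-1) \<noteq> ?R0" using nc yg y01 by auto
        moreover have "y - 1 \<noteq> y0" using calculation by auto
        ultimately show ?thesis using yg by (intro exI[of _ "y-1"]) auto
      next
        case False then show ?thesis using yg by auto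
      qed
      define z where "z = (LEAST z. y0 < z \<and> root_of G z \<noteq> ?R0)"
      from ex obtain z0 where z0: "y0 < z0" "root_of G z0 \<noteq> ?R0" "z0 \<le> y" by blast
      have zP: "y0 < z \<and> root_of G z \<noteq> ?R0" unfolding z_def
        by (rule LeastI[of "\<lambda>z. y0 < z \<and> root_of G z \<noteq> ?R0" z0]) (use z0 in simp)
      have "z \<le> z0" unfolding z_def by (rule Least_le) (use z0 in simp)
      hence zy: "z \<le> y" using z0(3) by simp
      have before: "root_of G w = ?R0" if "y0 \<le> w" "w < z" for w
      proof (cases "w = y0")
        case True then show ?thesis by simp
      next
        case False
        hence "y0 < w" using that by simp
        have "\<not> (y0 < w \<and> root_of G w \<noteq> ?R0)"
          using not_less_Least[of w "\<lambda>z. y0 < z \<and> root_of G z \<noteq> ?R0"] that(2) unfolding z_def by simp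
        thus ?thesis using \<open>y0 < w\<close> by simp
      qed
      have zD: "y0 + D < z"
      proof (rule ccontr)
        assume "\<not> y0 + D < z"
        hence "z - y0 \<le> D" by simp
        hence "root_of G (y0 + (z - y0)) = ?R0" using wR by simp
        moreover have "y0 + (z - y0) = z" using zP by simp
        ultimately show False using zP by simp
      qed
      define b where "b = z - 1"
      have vs: "vertex_stable_root G y0 b ?R0"
        unfolding vertex_stable_root_def
      proof
        fix t assume t: "t \<in> {y0..b}"
        have tt: "y0 \<le> t" "t < z" using t zD unfolding b_def by auto
        hence "root_of G t = ?R0" by (rule before)
        moreover have "is_root_component (G t) (root_of G t)" by (rule root_of_is[OF uq]) (use tt y01 in simp)
        ultimately show "is_root_component (G t) ?R0" by simp
      qed
      have "root_of G y \<noteq> {}" by (rule root_of_ne[OF uq]) (use yg y01 in simp)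
      then obtain m where m: "m \<in> root_of G y" by blast
      have knows: "\<forall>m'\<in>?R0. sub (stt G inp y0 m') (stt G inp y m)"
      proof
        fix m' assume m': "m' \<in> ?R0"
        have "sub (stt G inp y0 m') (stt G inp b m)"
          by (rule spread[OF A2 uq vs y01 _ _ D1 _ _ m']) (use zD b_def in auto)
        moreover have "sub (stt G inp b m) (stt G inp y m)" by (rule sub_prefix) (use zy b_def zD in auto)
        ultimately show "sub (stt G inp y0 m') (stt G inp y m)" by (rule sub_trans)
      qed
      have y0GY: "y0 \<in> GY G inp y" unfolding GY_def using y01 yg m knows by blast
      hence ne: "GY G inp y \<noteq> {}" by blast
      define y'' where "y'' = Max (GY G inp y)"
      have yin: "y'' \<in> GY G inp y" unfolding y''_def by (rule GY_Max[OF ne])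
      have "y0 \<le> y''" unfolding y''_def by (rule Max_ge[OF GY_fin y0GY])
      moreover have "y'' < y" using yin unfolding GY_def by simp
      ultimately have "gval G inp y'' = gval G inp y0" using less.IH by blast
      moreover have "gval G inp y = gval G inp y''" using gval_nc[OF nc, where inp=inp] ne unfolding y''_def by simp
      ultimately show ?thesis by simp
    qed
  qed
qed

lemma gval_valid:
  fixes G :: "nat \<Rightarrow> ('p::finite \<times> 'p) set" and inp :: "'p \<Rightarrow> 'v::linorder"
  assumes uq: "\<forall>r\<ge>1. \<exists>!R. is_root_component (G r) R"
  shows "1 \<le> y \<Longrightarrow> \<exists>q. gval G inp y = inp q"
proof (induction y rule: less_induct)
  case (less y)
  show ?case
  proof (cases "2 \<le> y \<and> root_of G (y-1) = root_of G y")
    case True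
    then show ?thesis using gval_c[OF True, where inp=inp] less.IH[of "y-1"] by auto
  next
    case nc: False
    show ?thesis
    proof (cases "GY G inp y \<noteq> {}")
      case True
      have yin: "Max (GY G inp y) \<in> GY G inp y" by (rule GY_Max[OF True])
      hence "Max (GY G inp y) < y" "1 \<le> Max (GY G inp y)" unfolding GY_def by auto
      then show ?thesis using gval_nc[OF nc, where inp=inp] True less.IH by auto
    next
      case False
      have "root_of G y \<noteq> {}" using root_of_ne[OF uq less.prems] .
      moreover have "finite (root_of G y)" by simp
      ultimately have "Min (inp ` root_of G y) \<in> inp ` root_of G y" by (intro Min_in) auto
      then show ?thesis using gval_nc[OF nc, where inp=inp] False by auto
    qed
  qed
qed

definition decf :: "nat \<Rightarrow> ('p,'v::linorder) view \<Rightarrow> 'v option" where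
  "decf D V = (if \<exists>y R. 1 \<le> y \<and> (\<forall>i\<le>D. kr V R (y+i))
     then Some (vv V (SOME y. \<exists>R. 1 \<le> y \<and> (\<forall>i\<le>D. kr V R (y+i)))) else None)"

lemma dec_char:
  fixes G :: "nat \<Rightarrow> ('p::finite \<times> 'p) set" and inp :: "'p \<Rightarrow> 'v::linorder"
  assumes uq: "\<forall>r\<ge>1. \<exists>!R. is_root_component (G r) R"
    and d: "decf D (stt G inp t q) = Some v"
  shows "\<exists>y. win G D y \<and> v = gval G inp y"
proof -
  let ?V = "stt G inp t q"
  have ex: "\<exists>y R. 1 \<le> y \<and> (\<forall>i\<le>D. kr ?V R (y+i))"
  proof (rule ccontr)
    assume "\<not> ?thesis"
    hence "decf D ?V = None" unfolding decf_def by simp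
    thus False using d by simp
  qed
  define y where "y = (SOME y. \<exists>R. 1 \<le> y \<and> (\<forall>i\<le>D. kr ?V R (y+i)))"
  have "\<exists>R. 1 \<le> y \<and> (\<forall>i\<le>D. kr ?V R (y+i))" unfolding y_def using ex by (rule someI_ex)
  then obtain R where y1: "1 \<le> y" and k: "\<forall>i\<le>D. kr ?V R (y+i)" by blast
  have v: "v = vv ?V y" using d ex unfolding decf_def y_def by simp
  have kc: "(\<forall>m\<in>R. sub (stt G inp (y+i) m) ?V) \<and> R = root_of G (y+i)" if "i \<le> D" for i
  proof -
    have "1 \<le> y + i" using y1 by simp
    have "kr ?V R (y+i)" using k that by simp
    from iffD1[OF kr_char[OF \<open>1 \<le> y + i\<close> uq] this] show ?thesis .
  qed
  have w: "win G D y" unfolding win_def using y1 kc[of 0] kc by auto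
  have "vv ?V y = gval G inp y" by (rule vv_gval[OF uq y1]) (use kc[of 0] in auto)
  thus ?thesis using w v by blast
qed

lemma dec_some:
  fixes G :: "nat \<Rightarrow> ('p::finite \<times> 'p) set" and inp :: "'p \<Rightarrow> 'v::linorder"
  assumes uq: "\<forall>r\<ge>1. \<exists>!R. is_root_component (G r) R"
    and w: "win G D y"
    and kn: "\<forall>i\<le>D. \<forall>m\<in>root_of G (y+i). sub (stt G inp (y+i) m) (stt G inp t q)"
  shows "decf D (stt G inp t q) \<noteq> None"
proof -
  have y1: "1 \<le> y" and wR: "\<forall>i\<le>D. root_of G (y+i) = root_of G y" using w unfolding win_def by auto
  have "\<forall>i\<le>D. kr (stt G inp t q) (root_of G y) (y+i)"
  proof (intro allI impI)
    fix i assume i: "i \<le> D"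
    have yi: "1 \<le> y + i" using y1 by simp
    have rr: "root_of G (y+i) = root_of G y" using wR i by simp
    have "\<forall>m\<in>root_of G (y+i). sub (stt G inp (y+i) m) (stt G inp t q)" using kn i by simp
    hence "(\<forall>m\<in>root_of G y. sub (stt G inp (y+i) m) (stt G inp t q)) \<and> root_of G y = root_of G (y+i)"
      using rr by simp
    thus "kr (stt G inp t q) (root_of G y) (y+i)" by (rule iffD2[OF kr_char[OF yi uq]])
  qed
  hence "\<exists>y R. 1 \<le> y \<and> (\<forall>i\<le>D. kr (stt G inp t q) R (y+i))" using y1 by blast
  thus ?thesis unfolding decf_def by simp
qed

lemma dec_mono:
  fixes G :: "nat \<Rightarrow> ('p::finite \<times> 'p) set" and inp :: "'p \<Rightarrow> 'v::linorder"
  assumes uq: "\<forall>r\<ge>1. \<exists>!R. is_root_component (G r) R"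
    and d: "decf D (stt G inp t q) \<noteq> None" and tt: "t \<le> t'"
  shows "decf D (stt G inp t' q) \<noteq> None"
proof -
  have "\<exists>y R. 1 \<le> y \<and> (\<forall>i\<le>D. kr (stt G inp t q) R (y+i))"
    using d unfolding decf_def by (auto split: if_splits)
  then obtain y R where y1: "1 \<le> y" and k: "\<forall>i\<le>D. kr (stt G inp t q) R (y+i)" by blast
  have "\<forall>i\<le>D. kr (stt G inp t' q) R (y+i)"
  proof (intro allI impI)
    fix i assume i: "i \<le> D"
    have yi: "1 \<le> y + i" using y1 by simp
    have a: "(\<forall>m\<in>R. sub (stt G inp (y+i) m) (stt G inp t q)) \<and> R = root_of G (y+i)"
    proof -
      have "kr (stt G inp t q) R (y+i)" using k i by simp
      from iffD1[OF kr_char[OF yi uq] this] show ?thesis .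
    qed
    have "\<forall>m\<in>R. sub (stt G inp (y+i) m) (stt G inp t' q)"
    proof
      fix m assume "m \<in> R"
      hence h: "sub (stt G inp (y+i) m) (stt G inp t q)" using a by blast
      show "sub (stt G inp (y+i) m) (stt G inp t' q)" by (rule sub_trans[OF h sub_prefix[OF tt]])
    qed
    thus "kr (stt G inp t' q) R (y+i)" using a by (intro iffD2[OF kr_char[OF yi uq]]) simp
  qed
  hence "\<exists>y R. 1 \<le> y \<and> (\<forall>i\<le>D. kr (stt G inp t' q) R (y+i))" using y1 by blast
  thus ?thesis unfolding decf_def by simp
qed

lemma win_agree:
  fixes G :: "nat \<Rightarrow> ('p::finite \<times> 'p) set" and inp :: "'p \<Rightarrow> 'v::linorder"
  assumes A2: "\<forall>r s R. 1 \<le> r \<longrightarrow> r \<le> s \<longrightarrow> s + 1 - r \<ge> D \<longrightarrow> vertex_stable_root G r s R \<longrightarrow> D_bounded G D r s R"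
    and uq: "\<forall>r\<ge>1. \<exists>!R. is_root_component (G r) R"
    and D1: "D \<ge> 1" and w1: "win G D y1" and w2: "win G D y2"
  shows "gval G inp y1 = gval G inp y2"
proof (cases "y1 \<le> y2")
  case True
  from claim[OF A2 uq D1 w1 True, where inp=inp] show ?thesis by simp
next
  case False
  hence "y2 \<le> y1" by simp
  from claim[OF A2 uq D1 w2 this, where inp=inp] show ?thesis by simp
qed

theorem theorem1:
  fixes D :: nat
  assumes "card (UNIV :: 'p set) \<ge> 2" and "D \<ge> 1"
  shows "\<exists>(ini :: 'p::finite \<Rightarrow> 'v::linorder \<Rightarrow> ('p, 'v) view)
            (msg :: 'p \<Rightarrow> ('p, 'v) view \<Rightarrow> ('p, 'v) view)
            (tr :: 'p \<Rightarrow> ('p, 'v) view \<Rightarrow> ('p \<times> ('p, 'v) view) set \<Rightarrow> ('p, 'v) view)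
            (dec :: ('p, 'v) view \<Rightarrow> 'v option).
          \<forall>(inp :: 'p \<Rightarrow> 'v) (G :: nat \<Rightarrow> ('p \<times> 'p) set).
            simple_graphs G \<and> assumption1 G D \<longrightarrow>
              solves_consensus (run ini msg tr inp G) dec inp \<and>
              (\<forall>p. dec (run ini msg tr inp G (r_ST G D + 4 * D + 1) p) \<noteq> None)"
proof (intro exI allI impI)
  fix inp :: "'p \<Rightarrow> 'v" and G :: "nat \<Rightarrow> ('p \<times> 'p) set"
  assume "simple_graphs G \<and> assumption1 G D"
  hence a1: "assumption1 G D" by blast
  have uq: "\<forall>r\<ge>1. \<exists>!R. is_root_component (G r) R" using a1 unfolding assumption1_def by blast
  have A2: "\<forall>r s R. 1 \<le> r \<longrightarrow> r \<le> s \<longrightarrow> s + 1 - r \<ge> D \<longrightarrow> vertex_stable_root G r s R \<longrightarrow> D_bounded G D r s R"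
    using a1 unfolding assumption1_def by blast
  have A3: "\<exists>r. r \<ge> 1 \<and> (\<exists>d R. d > 4 * D \<and> D_bounded G D r (r + d) R)"
    using a1 unfolding assumption1_def by blast
  have D1: "D \<ge> 1" by (rule assms(2))
  have run_eq: "run Init (\<lambda>p s. s) (\<lambda>p s M. Step s (Abs_fset M)) inp G = stt G inp"
    by (simp add: stt_def)
  define r0 where "r0 = r_ST G D"
  have "r0 \<ge> 1 \<and> (\<exists>d R. d > 4 * D \<and> D_bounded G D r0 (r0 + d) R)"
    unfolding r0_def r_ST_def by (rule LeastI_ex[OF A3])
  then obtain d R where r01: "1 \<le> r0" and dD: "d > 4 * D" and db: "D_bounded G D r0 (r0 + d) R" by blast
  have vs: "vertex_stable_root G r0 (r0 + d) R" using db unfolding D_bounded_def by blast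
  have rootR: "root_of G t = R" if "r0 \<le> t" "t \<le> r0 + d" for t
  proof -
    have rc: "is_root_component (G t) R" using vs that unfolding vertex_stable_root_def by auto
    have "1 \<le> t" using that r01 by simp
    thus ?thesis by (rule root_of_eq[OF uq _ rc])
  qed
  have w: "win G D r0" unfolding win_def
  proof (intro conjI allI impI)
    show "1 \<le> r0" by (rule r01)
    fix i assume "i \<le> D"
    thus "root_of G (r0 + i) = root_of G r0" using rootR dD by simp
  qed
  have vs2: "vertex_stable_root G r0 (r0 + 2 * D) R" using vs dD unfolding vertex_stable_root_def by auto
  have kn: "\<forall>i\<le>D. \<forall>m\<in>root_of G (r0+i). sub (stt G inp (r0+i) m) (stt G inp (r0 + 2 * D) q)" for q
  proof (intro allI impI ballI)
    fix i m assume i: "i \<le> D" and m: "m \<in> root_of G (r0+i)"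
    have "root_of G (r0+i) = R" by (rule rootR) (use i dD in auto)
    hence mR: "m \<in> R" using m by simp
    show "sub (stt G inp (r0+i) m) (stt G inp (r0 + 2 * D) q)"
      by (rule spread[OF A2 uq vs2 r01 _ _ D1 _ _ mR]) (use i in auto)
  qed
  have decided: "decf D (stt G inp (r0 + 2 * D) q) \<noteq> None" for q
    by (rule dec_some[OF uq w kn])
  have decided2: "decf D (stt G inp t q) \<noteq> None" if "r0 + 2 * D \<le> t" for q t
    by (rule dec_mono[OF uq decided that])
  have windows: "decf D (stt G inp t q) = Some v \<Longrightarrow> \<exists>y. win G D y \<and> v = gval G inp y" for t q v
    by (rule dec_char[OF uq])
  show "solves_consensus (run Init (\<lambda>p s. s) (\<lambda>p s M. Step s (Abs_fset M)) inp G) (decf D) inp \<and>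
      (\<forall>p. decf D (run Init (\<lambda>p s. s) (\<lambda>p s M. Step s (Abs_fset M)) inp G (r_ST G D + 4 * D + 1) p) \<noteq> None)"
    unfolding run_eq r0_def[symmetric]
  proof (intro conjI allI)
    show "decf D (stt G inp (r0 + 4 * D + 1) p) \<noteq> None" for p
      by (rule decided2) simp
    show "solves_consensus (stt G inp) (decf D) inp"
      unfolding solves_consensus_def
    proof (intro conjI allI impI)
      fix r r' p v
      assume rr: "r \<le> r'" and dv: "decf D (stt G inp r p) = Some v"
      obtain y where y: "win G D y" "v = gval G inp y" using windows[OF dv] by blast
      have "decf D (stt G inp r' p) \<noteq> None" by (rule dec_mono[OF uq _ rr]) (use dv in simp)
      then obtain v' where dv': "decf D (stt G inp r' p) = Some v'" by blast
      obtain y' where y': "win G D y'" "v' = gval G inp y'" using windows[OF dv'] by blast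
      have "gval G inp y' = gval G inp y" by (rule win_agree[OF A2 uq D1 y'(1) y(1)])
      thus "decf D (stt G inp r' p) = Some v" using dv' y y' by simp
    next
      fix r r' p q v w
      assume dv: "decf D (stt G inp r p) = Some v" and dw: "decf D (stt G inp r' q) = Some w"
      obtain y where y: "win G D y" "v = gval G inp y" using windows[OF dv] by blast
      obtain y' where y': "win G D y'" "w = gval G inp y'" using windows[OF dw] by blast
      have "gval G inp y = gval G inp y'" by (rule win_agree[OF A2 uq D1 y(1) y'(1)])
      thus "v = w" using y y' by simp
    next
      fix r p v
      assume dv: "decf D (stt G inp r p) = Some v"
      obtain y where y: "win G D y" "v = gval G inp y" using windows[OF dv] by blast
      have "1 \<le> y" using y(1) unfolding win_def by simp
      from gval_valid[OF uq this, where inp=inp] show "\<exists>q. v = inp q" using y(2) by simp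
    next
      fix p
      show "\<exists>r. decf D (stt G inp r p) \<noteq> None" using decided by blast
    qed
  qed
qed

end
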